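(* Let $\mu>\lambda$ and let $c=(c_1,c_2)$ be a positive unit vector ($\langle c\cdot c\rangle=1$). Then there is $\eta\in\mathbb C$ with $PCT\,f_{c\,\nu,\mathbf p}=\eta\,f_{c\,\nu,\mathbf p}$ for all $\mathbf p$ if and only if there exist $\theta_1,\theta_2\in\mathbb R$ such that $$c_1=\frac{e^{\frac12\pi\nu+i\theta_1}}{\sqrt{2\sinh\pi\nu}},\qquad c_2=\frac{e^{-\frac12\pi\nu+i\theta_2}}{\sqrt{2\sinh\pi\nu}},$$ and in that case $\eta=e^{-i(\theta_1+\theta_2+\frac32\pi)}$.
   Context: Fix $\omega>0$; work in the conformal chart $(t,\mathbf x)$, $t<0$, $\mathbf x\in\mathbb R^3$, of de Sitter spacetime. Let $\mu=m/\omega$ ($m$ the mass), $\lambda>0$ the coupling constant, $\mu>\lambda$, $\nu=\sqrt{\mu^2-\lambda^2}>0$. $J_a$ denotes the Bessel function of the first kind. For $\mathbf p\in\mathbb R^3$, $p=|\mathbf p|$, let $u_{\nu,\mathbf p}(t,\mathbf x)=\sqrt{\pi/\omega}\,(2\sinh\pi\nu)^{-1/2}(2\pi)^{-3/2}(-\omega t)^{3/2}J_{i\nu}(-pt)\,e^{i\mathbf x\cdot\mathbf p}$. On $\mathbb C^2$ use $\langle c\cdot c'\rangle=c_1^*c_1'-c_2^*c_2'$. For $c=(c_1,c_2)$ set $f_{c\,\nu,\mathbf p}=c_1u_{\nu,\mathbf p}+c_2u^*_{\nu,-\mathbf p}$. Operators: $(Pf)(t,\mathbf x)=f(t,-\mathbf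 x)$; $Cf=f^*$ (antilinear); $T$ replaces $t$ by $-t$ in the explicit formulas, where the multivalued factors are continued as $(-\omega(-t))^{3/2}=e^{\frac32 i\pi}(-\omega t)^{3/2}$ and $J_a(-s)=e^{i\pi a}J_a(s)$ for $s>0$ and any index $a$ (so $J_{\pm i\nu}(-s)=e^{\mp\pi\nu}J_{\pm i\nu}(s)$), term by term in linear combinations; $PCT=P\circ C\circ T$. *)

theory Defs
  imports "HOL-Analysis.Analysis"
begin

definition besselJ :: "complex \<Rightarrow> real \<Rightarrow> complex" where
  "besselJ a s = (\<Sum>k. (-1) ^ k * rGamma (of_nat k + a + 1) / fact k
                        * (complex_of_real (s / 2)) powr (2 * of_nat k + a))"

text \<open>nu = sqrt(mu^2 - lambda^2) with mu = m / omega.\<close>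
definition dsNu :: "real \<Rightarrow> real \<Rightarrow> real \<Rightarrow> real" where
  "dsNu m omega lam = sqrt ((m / omega)^2 - lam^2)"

definition dsN :: "real \<Rightarrow> real \<Rightarrow> real" where
  "dsN omega nu = sqrt (pi / omega) * (2 * sinh (pi * nu)) powr (-1/2) * (2 * pi) powr (-3/2)"

text \<open>Explicit formula N (-omega t)^(3/2) J_a(-p t) e^(i x.p), with Bessel index a.
  u_{nu,p} is the case a = i nu; u*_{nu,-p} has explicit formula with a = -i nu
  (since conj J_{i nu}(s) = J_{-i nu}(s) for s > 0).\<close>
definition dsForm :: "real \<Rightarrow> real \<Rightarrow> complex \<Rightarrow> real^3 \<Rightarrow> real \<Rightarrow> real^3 \<Rightarrow> complex" where
  "dsForm omega nu a p t x =
     complex_of_real (dsN omega nu) * complex_of_real ((- omega * t) powr (3/2))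
     * besselJ a (- norm p * t) * exp (\<i> * complex_of_real (inner x p))"

definition dsU :: "real \<Rightarrow> real \<Rightarrow> real^3 \<Rightarrow> real \<Rightarrow> real^3 \<Rightarrow> complex" where
  "dsU omega nu p t x = dsForm omega nu (\<i> * complex_of_real nu) p t x"

definition dsF :: "real \<Rightarrow> real \<Rightarrow> complex \<times> complex \<Rightarrow> real^3 \<Rightarrow> real \<Rightarrow> real^3 \<Rightarrow> complex" where
  "dsF omega nu c p t x = fst c * dsU omega nu p t x + snd c * cnj (dsU omega nu (- p) t x)"

text \<open>T applied to the explicit formula with index a: t replaced by -t, with
  (-omega(-t))^(3/2) = e^(3 i pi/2) (-omega t)^(3/2) and J_a(-s) = e^(i pi a) J_a(s).\<close>
definition dsFormT :: "real \<Rightarrow> real \<Rightarrow> complex \<Rightarrow> real^3 \<Rightarrow> real \<Rightarrow> real^3 \<Rightarrow> complex" where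
  "dsFormT omega nu a p t x =
     complex_of_real (dsN omega nu)
     * (exp (3/2 * pi * \<i>) * complex_of_real ((- omega * t) powr (3/2)))
     * (exp (\<i> * pi * a) * besselJ a (- norm p * t)) * exp (\<i> * complex_of_real (inner x p))"

definition dsTF :: "real \<Rightarrow> real \<Rightarrow> complex \<times> complex \<Rightarrow> real^3 \<Rightarrow> real \<Rightarrow> real^3 \<Rightarrow> complex" where
  "dsTF omega nu c p t x =
     fst c * dsFormT omega nu (\<i> * complex_of_real nu) p t x
     + snd c * dsFormT omega nu (- \<i> * complex_of_real nu) p t x"

definition dsPCTF :: "real \<Rightarrow> real \<Rightarrow> complex \<times> complex \<Rightarrow> real^3 \<Rightarrow> real \<Rightarrow> real^3 \<Rightarrow> complex" where
  "dsPCTF omega nu c p t x = cnj (dsTF omega nu c p t (- x))"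

end

theory Submission imports Defs begin


definition coefB :: "complex \<Rightarrow> nat \<Rightarrow> complex" where
  "coefB a k = (-1)^k * rGamma (of_nat k + a + 1) / fact k"

lemma rGamma_bound:
  assumes "Re a \<ge> 0"
  shows "norm (rGamma (of_nat k + a + 1)) \<le> norm (rGamma (a + 1))"
proof (induction k)
  case 0 then show ?case by simp
next
  case (Suc k)
  define z where "z = of_nat k + a + 1"
  have eq: "z * rGamma (z + 1) = rGamma z" by (rule rGamma_plus1)
  have "norm z \<ge> Re z" by (rule complex_Re_le_cmod)
  moreover have "Re z \<ge> 1" using assms by (simp add: z_def)
  ultimately have nz: "norm z \<ge> 1" by linarith
  have "norm (rGamma (z + 1)) \<le> norm z * norm (rGamma (z+1))"
    using nz by (simp add: mult_le_cancel_right1)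
  also have "\<dots> = norm (rGamma z)" using eq by (metis norm_mult)
  finally have "norm (rGamma (z + 1)) \<le> norm (rGamma (a + 1))"
    using Suc.IH by (simp add: z_def)
  then show ?case by (simp add: z_def add_ac)
qed

lemma coefB_summable:
  assumes "Re a \<ge> 0"
  shows "summable (\<lambda>k. coefB a k * y ^ k)"
proof (rule summable_comparison_test')
  show "summable (\<lambda>k. norm (rGamma (a + 1)) * (inverse (fact k) * norm y ^ k))"
    by (intro summable_mult summable_exp)
  fix k :: nat
  show "norm (coefB a k * y ^ k) \<le> norm (rGamma (a + 1)) * (inverse (fact k) * norm y ^ k)"
    using rGamma_bound[OF assms, of k]
    by (simp add: coefB_def norm_mult norm_divide norm_power divide_simps mult_right_mono)
qed

lemma besselJ_repr:
  assumes "s > 0" "Re a \<ge> 0"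
  shows "besselJ a s = complex_of_real (s/2) powr a * (\<Sum>k. coefB a k * (complex_of_real ((s/2)^2)) ^ k)"
proof -
  have t: "(-1) ^ k * rGamma (of_nat k + a + 1) / fact k * (complex_of_real (s / 2)) powr (2 * of_nat k + a)
     = complex_of_real (s/2) powr a * (coefB a k * (complex_of_real ((s/2)^2)) ^ k)" for k
  proof -
    have "(complex_of_real (s / 2)) powr (2 * of_nat k + a) = complex_of_real (s / 2) powr (of_nat (2*k)) * complex_of_real (s / 2) powr a"
      by (simp add: powr_add)
    also have "complex_of_real (s / 2) powr (of_nat (2*k)) = (complex_of_real ((s/2)^2)) ^ k"
      using assms by (subst powr_nat') (auto simp: power_mult)
    finally show ?thesis by (simp add: coefB_def)
  qed
  show ?thesis unfolding besselJ_def t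
    by (rule suminf_mult[OF coefB_summable[OF assms(2)]])
qed

lemma cnj_suminf: "summable f \<Longrightarrow> cnj (suminf f) = (\<Sum>n. cnj (f n))"
  by (metis sums_cnj sums_unique summable_sums)

lemma cnj_coefB: "cnj (coefB a k) = coefB (cnj a) k"
  by (simp add: coefB_def cnj_rGamma)

lemma cnj_besselJ:
  assumes "s > 0" "Re a = 0"
  shows "cnj (besselJ a s) = besselJ (cnj a) s"
proof -
  have r1: "Re a \<ge> 0" "Re (cnj a) \<ge> 0" using assms by auto
  have "cnj (complex_of_real (s/2) powr a) = complex_of_real (s/2) powr cnj a"
    by (subst cnj_powr) (use assms in auto)
  moreover have "cnj (\<Sum>k. coefB a k * (complex_of_real ((s/2)^2)) ^ k)
      = (\<Sum>k. coefB (cnj a) k * (complex_of_real ((s/2)^2)) ^ k)"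
    by (subst cnj_suminf[OF coefB_summable[OF r1(1)]]) (simp add: cnj_coefB)
  ultimately show ?thesis
    by (simp add: besselJ_repr[OF assms(1) r1(1)] besselJ_repr[OF assms(1) r1(2)])
qed

lemma G_cont: "Re a \<ge> 0 \<Longrightarrow> isCont (\<lambda>y. \<Sum>k. coefB a k * y ^ k) y"
  by (rule isCont_powser_converges_everywhere) (rule coefB_summable)

lemma G_zero: "(\<Sum>k. coefB a k * 0 ^ k) = rGamma (a + 1)"
  by (subst suminf_finite[of "{0}"]) (auto simp: coefB_def)

lemma powr_cis:
  assumes "s > 0"
  shows "complex_of_real (s/2) powr (\<i> * complex_of_real nu) = cis (nu * ln (s/2))"
proof -
  have s2: "0 < s/2" using assms by simp
  have "Ln (complex_of_real (s/2)) = of_real (ln (s/2))" using Ln_of_real[OF s2] by simp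
  then show ?thesis using assms by (simp add: powr_def cis_conv_exp mult_ac)
qed

lemma cis_npi: "cis (real n * pi) = (-1) ^ n"
proof (induction n)
  case (Suc n)
  have "cis (real (Suc n) * pi) = cis (real n * pi) * cis pi" by (simp only: cis_mult) (simp add: distrib_right add.commute)
  also have "\<dots> = (-1)^Suc n" by (simp only: Suc.IH cis_pi) simp
  finally show ?case .
qed simp

lemma key_eq:
  fixes nu :: real
  assumes "s > 0"
    and h: "\<alpha> * besselJ (\<i> * nu) s + \<beta> * cnj (besselJ (\<i> * nu) s) = 0"
  shows "\<alpha> * cis (nu * ln (s/2)) * (\<Sum>k. coefB (\<i> * nu) k * (complex_of_real ((s/2)^2)) ^ k)
       + \<beta> * cis (- (nu * ln (s/2))) * cnj (\<Sum>k. coefB (\<i> * nu) k * (complex_of_real ((s/2)^2)) ^ k) = 0"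
proof -
  have re: "Re (\<i> * complex_of_real nu) \<ge> 0" by simp
  from h show ?thesis
    unfolding besselJ_repr[OF assms(1) re] powr_cis[OF assms(1)] by (simp add: cis_cnj mult_ac)
qed

lemma indep:
  fixes nu :: real
  assumes nu: "nu > 0"
    and h: "\<And>s. s > 0 \<Longrightarrow> \<alpha> * besselJ (\<i> * nu) s + \<beta> * cnj (besselJ (\<i> * nu) s) = 0"
  shows "\<alpha> = 0 \<and> \<beta> = 0"
proof -
  define G where "G = (\<lambda>y. \<Sum>k. coefB (\<i> * complex_of_real nu) k * y ^ k)"
  have Gc: "isCont G 0" unfolding G_def by (rule G_cont) simp
  have G0: "G 0 = rGamma (\<i> * complex_of_real nu + 1)" unfolding G_def by (rule G_zero)
  have G0nz: "G 0 \<noteq> 0"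
  proof
    assume "G 0 = 0"
    then have "\<i> * complex_of_real nu + 1 \<in> \<int>\<^sub>\<le>\<^sub>0" using G0 rGamma_eq_zero_iff by auto
    then have "\<i> * complex_of_real nu + 1 \<in> \<real>" by (auto elim!: nonpos_Ints_cases)
    then show False using nu by (auto simp: complex_is_Real_iff)
  qed
  define q where "q = exp (- pi / nu)"
  have q: "0 < q" "q < 1" using nu by (auto simp: q_def)
  define e where "e = exp (- pi / (2 * nu))"
  have e: "e > 0" by (simp add: e_def)
  have lim: "(\<lambda>n. G (complex_of_real ((c * q ^ n)^2))) \<longlonglongrightarrow> G 0" for c
  proof -
    have "(\<lambda>n. complex_of_real ((c * q ^ n)^2)) \<longlonglongrightarrow> complex_of_real ((c * 0)^2)"
      by (intro tendsto_intros LIMSEQ_power_zero) (use q in auto)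
    then show ?thesis using Gc isCont_tendsto_compose by fastforce
  qed
  have E1: "\<alpha> * G 0 + \<beta> * cnj (G 0) = 0"
  proof -
    have z: "\<alpha> * G (complex_of_real ((1 * q ^ n)^2)) + \<beta> * cnj (G (complex_of_real ((1 * q ^ n)^2))) = 0" for n
    proof -
      define s where "s = 2 * q ^ n"
      have s: "s > 0" using q by (simp add: s_def)
      have ln: "nu * ln (s/2) = - (real n * pi)"
        using q nu by (simp add: s_def ln_realpow q_def)
      have c1: "cis (- (real n * pi)) = (-1)^n" by (simp add: cis_cnj[symmetric] cis_npi)
      have c2: "cis (- (- (real n * pi))) = (-1)^n" by (simp add: cis_npi)
      have "(-1)^n * (\<alpha> * G (complex_of_real ((s/2)^2)) + \<beta> * cnj (G (complex_of_real ((s/2)^2)))) = 0"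
        using key_eq[OF s h[OF s]] unfolding G_def ln c1 c2
        by (simp add: algebra_simps)
      then show ?thesis by (simp add: s_def)
    qed
    have "(\<lambda>n. \<alpha> * G (complex_of_real ((1 * q ^ n)^2)) + \<beta> * cnj (G (complex_of_real ((1 * q ^ n)^2))))
       \<longlonglongrightarrow> \<alpha> * G 0 + \<beta> * cnj (G 0)"
      by (intro tendsto_intros lim)
    then show ?thesis unfolding z using LIMSEQ_unique tendsto_const by blast
  qed
  have E2: "\<alpha> * G 0 - \<beta> * cnj (G 0) = 0"
  proof -
    have z: "\<alpha> * G (complex_of_real ((e * q ^ n)^2)) - \<beta> * cnj (G (complex_of_real ((e * q ^ n)^2))) = 0" for n
    proof -
      define s where "s = 2 * (e * q ^ n)"
      have s: "s > 0" using q e by (simp add: s_def)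
      have ln: "nu * ln (s/2) = - (real n * pi) + - (pi/2)"
        using q nu e by (simp add: s_def ln_realpow q_def e_def ln_mult field_simps)
      have c1: "cis (- (real n * pi) + - (pi/2)) = (-1)^n * (- \<i>)"
      proof -
        have "cis (- (real n * pi) + - (pi/2)) = cis (- (real n * pi)) * cis (- (pi/2))" by (simp only: cis_mult)
        also have "\<dots> = (-1)^n * (- \<i>)" by (simp add: cis_cnj[symmetric] cis_npi)
        finally show ?thesis .
      qed
      have c2: "cis (- (- (real n * pi) + - (pi/2))) = (-1)^n * \<i>"
      proof -
        have "cis (- (- (real n * pi) + - (pi/2))) = cis (real n * pi) * cis (pi/2)" by (simp only: cis_mult minus_add_distrib minus_minus)
        also have "\<dots> = (-1)^n * \<i>" by (simp add: cis_npi)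
        finally show ?thesis .
      qed
      have "(-1)^n * (- \<i>) * (\<alpha> * G (complex_of_real ((s/2)^2)) - \<beta> * cnj (G (complex_of_real ((s/2)^2)))) = 0"
        using key_eq[OF s h[OF s]] unfolding G_def ln c1 c2
        by (simp add: algebra_simps)
      then show ?thesis by (simp add: s_def)
    qed
    have "(\<lambda>n. \<alpha> * G (complex_of_real ((e * q ^ n)^2)) - \<beta> * cnj (G (complex_of_real ((e * q ^ n)^2))))
       \<longlonglongrightarrow> \<alpha> * G 0 - \<beta> * cnj (G 0)"
      by (intro tendsto_intros lim)
    then show ?thesis unfolding z using LIMSEQ_unique tendsto_const by blast
  qed
  have "2 * (\<alpha> * G 0) = (\<alpha> * G 0 + \<beta> * cnj (G 0)) + (\<alpha> * G 0 - \<beta> * cnj (G 0))" by simp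
  then have A: "\<alpha> * G 0 = 0" using E1 E2 by simp
  then have B: "\<beta> * cnj (G 0) = 0" using E1 by (metis add_0)
  show ?thesis using A B G0nz by auto
qed


lemma alg_back:
  fixes L S th1 th2 :: real and c1 c2 :: complex
  assumes "S \<noteq> 0"
   "c1 = exp (complex_of_real (L/2) + \<i> * th1) / complex_of_real S"
   "c2 = exp (complex_of_real (- L/2) + \<i> * th2) / complex_of_real S"
  shows "\<i> * cnj c2 * exp (complex_of_real L) = \<i> * exp (- \<i> * complex_of_real (th1+th2)) * c1"
   and "\<i> * cnj c1 * exp (- complex_of_real L) = \<i> * exp (- \<i> * complex_of_real (th1+th2)) * c2"
proof -
  have a: "cnj c2 = exp (complex_of_real (- L/2) - \<i> * th2) / S" by (simp add: assms exp_cnj) (rule arg_cong[where f=exp], simp)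
  have b: "cnj c1 = exp (complex_of_real (L/2) - \<i> * th1) / S" by (simp add: assms exp_cnj)
  have "\<i> * cnj c2 * exp (complex_of_real L) = \<i> * exp ((complex_of_real (- L/2) - \<i> * th2) + complex_of_real L) / S"
    unfolding a exp_add by simp
  also have "(complex_of_real (- L/2) - \<i> * th2) + complex_of_real L = - \<i> * complex_of_real (th1+th2) + (complex_of_real (L/2) + \<i> * th1)"
    by (simp add: algebra_simps)
  also have "\<i> * exp (- \<i> * complex_of_real (th1+th2) + (complex_of_real (L/2) + \<i> * th1)) / S = \<i> * exp (- \<i> * complex_of_real (th1+th2)) * c1"
    unfolding assms(2) exp_add by simp
  finally show "\<i> * cnj c2 * exp (complex_of_real L) = \<i> * exp (- \<i> * complex_of_real (th1+th2)) * c1" .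
  have "\<i> * cnj c1 * exp (- complex_of_real L) = \<i> * exp ((complex_of_real (L/2) - \<i> * th1) + - complex_of_real L) / S"
    unfolding b exp_add by simp
  also have "(complex_of_real (L/2) - \<i> * th1) + - complex_of_real L = - \<i> * complex_of_real (th1+th2) + (complex_of_real (- L/2) + \<i> * th2)"
    by (simp add: algebra_simps)
  also have "\<i> * exp (- \<i> * complex_of_real (th1+th2) + (complex_of_real (- L/2) + \<i> * th2)) / S = \<i> * exp (- \<i> * complex_of_real (th1+th2)) * c2"
    unfolding assms(3) exp_add by simp
  finally show "\<i> * cnj c1 * exp (- complex_of_real L) = \<i> * exp (- \<i> * complex_of_real (th1+th2)) * c2" .
qed


lemma F_form:
  fixes nu omega :: real
  shows "dsF omega nu c p t x = complex_of_real (dsN omega nu) * complex_of_real ((- omega * t) powr (3/2))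
     * exp (\<i> * complex_of_real (inner x p))
     * (fst c * besselJ (\<i> * nu) (- norm p * t) + snd c * cnj (besselJ (\<i> * nu) (- norm p * t)))"
  unfolding dsF_def dsU_def dsForm_def by (simp add: exp_cnj algebra_simps)

lemma exp_3half: "exp (3/2 * complex_of_real pi * \<i>) = - \<i>"
proof -
  have "exp (3/2 * complex_of_real pi * \<i>) = cis (pi + pi/2)"
    by (simp add: cis_conv_exp mult_ac)
  also have "\<dots> = cis pi * cis (pi/2)" by (simp only: cis_mult)
  finally show ?thesis by simp
qed

lemma exp_3half': "exp (- (\<i> * (complex_of_real pi * 3) / 2)) = \<i>"
proof -
  have "exp (- (\<i> * (complex_of_real pi * 3) / 2)) = cnj (exp (3/2 * complex_of_real pi * \<i>))"
    by (simp add: exp_cnj mult_ac)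
  then show ?thesis by (simp only: exp_3half) simp
qed

lemma PCT_form:
  fixes nu omega :: real
  assumes "p \<noteq> 0" "t < 0"
  shows "dsPCTF omega nu c p t x = complex_of_real (dsN omega nu) * complex_of_real ((- omega * t) powr (3/2))
     * exp (\<i> * complex_of_real (inner x p))
     * (\<i> * (cnj (fst c) * exp (- complex_of_real (pi*nu)) * cnj (besselJ (\<i> * nu) (- norm p * t))
            + cnj (snd c) * exp (complex_of_real (pi*nu)) * besselJ (\<i> * nu) (- norm p * t)))"
proof -
  have s: "- norm p * t > 0" using assms by (simp add: mult_neg_pos mult_pos_neg)
  have j: "besselJ (- \<i> * complex_of_real nu) (- norm p * t) = cnj (besselJ (\<i> * nu) (- norm p * t))"
    using cnj_besselJ[OF s, of "\<i> * nu"] by simp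
  have e1: "exp (\<i> * complex_of_real pi * (\<i> * complex_of_real nu)) = exp (- complex_of_real (pi*nu))"
    by (simp add: algebra_simps)
  have e2: "exp (\<i> * complex_of_real pi * (- \<i> * complex_of_real nu)) = exp (complex_of_real (pi*nu))"
    by (simp add: algebra_simps)
  show ?thesis
    unfolding dsPCTF_def dsTF_def dsFormT_def j e1 e2 exp_3half
    by (simp add: exp_cnj algebra_simps exp_3half')
qed



lemma polar_form:
  fixes r S L :: real
  assumes "cmod z = exp (L/2) / S" "S > 0"
  shows "z = exp (complex_of_real (L/2) + \<i> * complex_of_real (Arg z)) / complex_of_real S"
proof -
  have "z = complex_of_real (cmod z) * cis (Arg z)" using rcis_cmod_Arg[of z] by (simp add: rcis_def)
  also have "\<dots> = exp (complex_of_real (L/2) + \<i> * complex_of_real (Arg z)) / complex_of_real S"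
  proof -
    have e: "complex_of_real (exp (L/2)) = exp (complex_of_real L / 2)"
      by (metis exp_of_real of_real_divide of_real_numeral)
    show ?thesis unfolding assms(1) exp_add cis_conv_exp using e by simp
  qed
  finally show ?thesis .
qed

lemma alg_fwd:
  fixes L :: real and c1 c2 \<eta> :: complex
  assumes L: "L > 0"
    and E1: "\<i> * cnj c2 * exp (complex_of_real L) = \<eta> * c1"
    and E2: "\<i> * cnj c1 * exp (- complex_of_real L) = \<eta> * c2"
    and N: "cnj c1 * c1 - cnj c2 * c2 = 1"
  shows "\<exists>th1 th2. c1 = exp (complex_of_real (L/2) + \<i> * complex_of_real th1) / complex_of_real (sqrt (2 * sinh L))
     \<and> c2 = exp (complex_of_real (- L/2) + \<i> * complex_of_real th2) / complex_of_real (sqrt (2 * sinh L))"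
proof -
  define u where "u = exp (L/2)"
  have u: "u > 1" using L by (simp add: u_def)
  have ea: "exp L = u^2" by (simp add: u_def power2_eq_square flip: exp_add)
  have eb: "exp (-L) = 1 / u^2" by (simp add: ea exp_minus field_simps)
  define r1 where "r1 = cmod c1"
  define r2 where "r2 = cmod c2"
  define h where "h = cmod \<eta>"
  have n1: "r2 * u^2 = h * r1"
    using arg_cong[OF E1, of cmod] by (simp add: norm_mult r1_def r2_def h_def ea)
  have n2: "r1 * (1/u^2) = h * r2"
    using arg_cong[OF E2, of cmod] by (simp add: norm_mult r1_def r2_def h_def eb flip: exp_of_real)
  have "complex_of_real (r1^2 - r2^2) = 1"
    using N complex_norm_square[of c1] complex_norm_square[of c2] by (simp add: r1_def r2_def mult.commute)
  then have nn: "r1^2 - r2^2 = 1" by (metis of_real_eq_1_iff)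
  have r1p: "r1 > 0"
  proof -
    have "r1 \<noteq> 0"
    proof
      assume "r1 = 0"
      then show False using nn zero_le_power2[of r2] by simp
    qed
    moreover have "r1 \<ge> 0" by (simp add: r1_def)
    ultimately show ?thesis by simp
  qed
  have r2p: "r2 > 0"
  proof (rule ccontr)
    assume "\<not> r2 > 0"
    then have "r2 = 0" using r2_def by (simp add: less_le)
    then show False using n2 r1p u by simp
  qed
  have hh: "h * h = 1"
  proof -
    have "(r2 * u^2) * (r1 * (1/u^2)) = (h * r1) * (h * r2)" using n1 n2 by simp
    then have "r1 * r2 = (h * h) * (r1 * r2)" using u by (simp add: field_simps)
    then show ?thesis using r1p r2p by simp
  qed
  have h0: "h \<ge> 0" by (simp add: h_def)
  have "h^2 = 1" using hh by (simp add: power2_eq_square)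
  then have h1: "h = 1" using h0 by (auto simp: power2_eq_1_iff)
  have r1e: "r1 = r2 * u^2" using n1 h1 by simp
  define S where "S = sqrt (2 * sinh L)"
  have sp: "2 * sinh L \<ge> 0" using L by simp
  have "S^2 = 2 * sinh L" unfolding S_def using sp by (rule real_sqrt_pow2)
  also have "\<dots> = u^2 - 1/u^2" by (simp add: sinh_field_def ea eb)
  finally have S2: "S^2 = u^2 - 1/u^2" .
  have Sp: "S > 0" using L by (simp add: S_def)
  have u4: "u^4 = u*(u*(u*u))" by (simp add: power_def numeral_eq_Suc)
  have "r2^2 * (u^4 - 1) = 1" using nn r1e unfolding u4 by (simp add: power_mult_distrib power2_eq_square algebra_simps)
  moreover have "(1/u / S)^2 * (u^4 - 1) = 1"
    using S2 u Sp by (simp add: power_divide field_simps)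
  ultimately have eq: "r2^2 * (u^4 - 1) = (1/u/S)^2 * (u^4 - 1)" by simp
  have d: "u^4 - 1 \<noteq> 0" using one_less_power[OF u, of 4] by simp
  have "r2^2 = (1/u/S)^2" using mult_right_cancel[OF d] eq by blast
  then have r2e: "r2 = 1/u/S" using r2p Sp u by (simp add: power2_eq_iff_nonneg)
  have r1e': "r1 = u / S" using r1e r2e u by (simp add: power2_eq_square)
  have m1: "cmod c1 = exp (L/2) / S" using r1e' by (simp add: r1_def u_def)
  have em: "exp (- L/2) = 1/u"
  proof -
    have "exp (- L/2) * u = 1" unfolding u_def by (simp flip: exp_add)
    then show ?thesis using u by (simp add: field_simps)
  qed
  have m2: "cmod c2 = exp (- L/2) / S" using r2e by (simp only: r2_def em)
  have p1: "c1 = exp (complex_of_real (L/2) + \<i> * complex_of_real (Arg c1)) / complex_of_real S"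
    by (rule polar_form[OF m1 Sp])
  have p2: "c2 = exp (complex_of_real (- L/2) + \<i> * complex_of_real (Arg c2)) / complex_of_real S"
    by (rule polar_form[OF m2 Sp])
  show ?thesis
    apply (rule exI[of _ "Arg c1"], rule exI[of _ "Arg c2"])
    using p1 p2 by (simp only: S_def)
qed

lemma dsN_nz:
  fixes omega nu :: real
  assumes "omega > 0" "nu > 0"
  shows "dsN omega nu \<noteq> 0"
  using assms by (simp add: dsN_def)

lemma P_iff:
  fixes nu omega :: real
  assumes nu: "nu > 0" and om: "omega > 0"
  shows "(\<forall>p::real^3. p \<noteq> 0 \<longrightarrow> (\<forall>t<0. \<forall>x. dsPCTF omega nu c p t x = \<eta> * dsF omega nu c p t x))
     \<longleftrightarrow> (\<i> * cnj (snd c) * exp (complex_of_real (pi*nu)) = \<eta> * fst c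
          \<and> \<i> * cnj (fst c) * exp (- complex_of_real (pi*nu)) = \<eta> * snd c)"
    (is "?P \<longleftrightarrow> ?E1 \<and> ?E2")
proof
  assume H: ?P
  define \<alpha> where "\<alpha> = \<i> * cnj (snd c) * exp (complex_of_real (pi*nu)) - \<eta> * fst c"
  define \<beta> where "\<beta> = \<i> * cnj (fst c) * exp (- complex_of_real (pi*nu)) - \<eta> * snd c"
  have "\<alpha> * besselJ (\<i> * nu) s + \<beta> * cnj (besselJ (\<i> * nu) s) = 0" if s: "s > 0" for s
  proof -
    define p0 :: "real^3" where "p0 = (\<chi> i. 1)"
    have "p0 $ 1 = 1" by (simp add: p0_def)
    then have p0: "p0 \<noteq> 0" by (metis zero_index zero_neq_one)
    then have np: "norm p0 > 0" by simp
    define t where "t = - s / norm p0"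
    have t: "t < 0" using s np by (simp add: t_def)
    have st: "- norm p0 * t = s" using np by (simp add: t_def)
    have "dsPCTF omega nu c p0 t 0 = \<eta> * dsF omega nu c p0 t 0" using H p0 t by blast
    then have eq: "complex_of_real (dsN omega nu) * complex_of_real ((- omega * t) powr (3/2)) *
      (\<i> * (cnj (fst c) * exp (- complex_of_real (pi*nu)) * cnj (besselJ (\<i> * nu) s)
            + cnj (snd c) * exp (complex_of_real (pi*nu)) * besselJ (\<i> * nu) s))
      = complex_of_real (dsN omega nu) * complex_of_real ((- omega * t) powr (3/2)) *
        (\<eta> * (fst c * besselJ (\<i> * nu) s + snd c * cnj (besselJ (\<i> * nu) s)))"
      unfolding PCT_form[OF p0 t] F_form st by (simp add: mult_ac)
    have K: "complex_of_real (dsN omega nu) * complex_of_real ((- omega * t) powr (3/2)) \<noteq> 0"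
      using dsN_nz[OF om nu] om t by (simp add: mult_neg_pos mult_pos_neg)
    have eq2: "\<i> * (cnj (fst c) * exp (- complex_of_real (pi*nu)) * cnj (besselJ (\<i> * nu) s)
            + cnj (snd c) * exp (complex_of_real (pi*nu)) * besselJ (\<i> * nu) s)
      = \<eta> * (fst c * besselJ (\<i> * nu) s + snd c * cnj (besselJ (\<i> * nu) s))"
      using mult_left_cancel[OF K] eq by blast
    have "\<alpha> * besselJ (\<i> * nu) s + \<beta> * cnj (besselJ (\<i> * nu) s) =
      \<i> * (cnj (fst c) * exp (- complex_of_real (pi*nu)) * cnj (besselJ (\<i> * nu) s)
            + cnj (snd c) * exp (complex_of_real (pi*nu)) * besselJ (\<i> * nu) s)
      - \<eta> * (fst c * besselJ (\<i> * nu) s + snd c * cnj (besselJ (\<i> * nu) s))"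
      by (simp add: \<alpha>_def \<beta>_def algebra_simps)
    then show ?thesis using eq2 by simp
  qed
  then have "\<alpha> = 0 \<and> \<beta> = 0" using indep[OF nu] by blast
  then show "?E1 \<and> ?E2" by (simp add: \<alpha>_def \<beta>_def)
next
  assume E: "?E1 \<and> ?E2"
  show ?P
  proof (intro allI impI)
    fix p :: "real^3" and t :: real and x :: "real^3"
    assume p: "p \<noteq> 0" and t: "t < 0"
    have "\<i> * (cnj (fst c) * exp (- complex_of_real (pi*nu)) * cnj (besselJ (\<i> * nu) (- norm p * t))
            + cnj (snd c) * exp (complex_of_real (pi*nu)) * besselJ (\<i> * nu) (- norm p * t))
        = (\<i> * cnj (snd c) * exp (complex_of_real (pi*nu))) * besselJ (\<i> * nu) (- norm p * t)
          + (\<i> * cnj (fst c) * exp (- complex_of_real (pi*nu))) * cnj (besselJ (\<i> * nu) (- norm p * t))"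
      by (simp add: algebra_simps)
    also have "\<dots> = \<eta> * (fst c * besselJ (\<i> * nu) (- norm p * t) + snd c * cnj (besselJ (\<i> * nu) (- norm p * t)))"
      using E by (simp add: algebra_simps)
    finally have k: "\<i> * (cnj (fst c) * exp (- complex_of_real (pi*nu)) * cnj (besselJ (\<i> * nu) (- norm p * t))
            + cnj (snd c) * exp (complex_of_real (pi*nu)) * besselJ (\<i> * nu) (- norm p * t))
        = \<eta> * (fst c * besselJ (\<i> * nu) (- norm p * t) + snd c * cnj (besselJ (\<i> * nu) (- norm p * t)))" .
    show "dsPCTF omega nu c p t x = \<eta> * dsF omega nu c p t x"
      unfolding PCT_form[OF p t] F_form k by (simp add: mult_ac)
  qed
qed

lemma exp_m3half: "exp (- \<i> * complex_of_real (3/2 * pi)) = \<i>"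
proof -
  have "exp (- \<i> * complex_of_real (3/2 * pi)) = cnj (exp (3/2 * complex_of_real pi * \<i>))"
    by (simp add: exp_cnj mult_ac)
  then show ?thesis by (simp only: exp_3half) simp
qed

theorem corollary4:
  fixes omega m lam :: real and c :: "complex \<times> complex"
  assumes "omega > 0" and "lam > 0" and "m / omega > lam"
    and "cnj (fst c) * fst c - cnj (snd c) * snd c = 1"
  shows "((\<exists>\<eta>::complex. \<forall>p::real^3. p \<noteq> 0 \<longrightarrow> (\<forall>t<0. \<forall>x.
            dsPCTF omega (dsNu m omega lam) c p t x = \<eta> * dsF omega (dsNu m omega lam) c p t x))
         \<longleftrightarrow> (\<exists>(\<theta>1::real) (\<theta>2::real).
            fst c = exp (complex_of_real (pi * dsNu m omega lam / 2) + \<i> * \<theta>1)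
                    / complex_of_real (sqrt (2 * sinh (pi * dsNu m omega lam))) \<and>
            snd c = exp (complex_of_real (- pi * dsNu m omega lam / 2) + \<i> * \<theta>2)
                    / complex_of_real (sqrt (2 * sinh (pi * dsNu m omega lam))))) \<and>
         (\<forall>(\<eta>::complex) (\<theta>1::real) (\<theta>2::real).
           (fst c = exp (complex_of_real (pi * dsNu m omega lam / 2) + \<i> * \<theta>1)
                    / complex_of_real (sqrt (2 * sinh (pi * dsNu m omega lam))) \<and>
            snd c = exp (complex_of_real (- pi * dsNu m omega lam / 2) + \<i> * \<theta>2)
                    / complex_of_real (sqrt (2 * sinh (pi * dsNu m omega lam))) \<and>
            (\<forall>p::real^3. p \<noteq> 0 \<longrightarrow> (\<forall>t<0. \<forall>x.
              dsPCTF omega (dsNu m omega lam) c p t x = \<eta> * dsF omega (dsNu m omega lam) c p t x)))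
           \<longrightarrow> \<eta> = exp (- \<i> * (\<theta>1 + \<theta>2 + 3/2 * pi)))"
proof -
  obtain nu where nu_def: "nu = dsNu m omega lam" by simp
  have "(m/omega)^2 > lam^2" using assms(2,3) by (simp add: power_strict_mono)
  then have nu: "nu > 0" by (simp add: nu_def dsNu_def)
  define L where "L = pi * nu"
  have L: "L > 0" using nu by (simp add: L_def)
  have r: "- pi * nu / 2 = - L / 2" "pi * nu / 2 = L / 2" by (simp_all add: L_def)
  have S: "sqrt (2 * sinh L) \<noteq> 0" using L by simp
  note Pi = P_iff[OF nu assms(1), of c, folded L_def]
  show ?thesis
    unfolding nu_def[symmetric] r L_def[symmetric]
  proof (intro conjI iffI allI impI)
    assume "\<exists>\<eta>. \<forall>p::real^3. p \<noteq> 0 \<longrightarrow> (\<forall>t<0. \<forall>x. dsPCTF omega nu c p t x = \<eta> * dsF omega nu c p t x)"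
    then obtain \<eta> where "\<forall>p::real^3. p \<noteq> 0 \<longrightarrow> (\<forall>t<0. \<forall>x. dsPCTF omega nu c p t x = \<eta> * dsF omega nu c p t x)" by blast
    then have E: "\<i> * cnj (snd c) * exp (complex_of_real L) = \<eta> * fst c"
        "\<i> * cnj (fst c) * exp (- complex_of_real L) = \<eta> * snd c" using Pi by auto
    show "\<exists>\<theta>1 \<theta>2. fst c = exp (complex_of_real (L / 2) + \<i> * complex_of_real \<theta>1) / complex_of_real (sqrt (2 * sinh L)) \<and>
                 snd c = exp (complex_of_real (- L / 2) + \<i> * complex_of_real \<theta>2) / complex_of_real (sqrt (2 * sinh L))"
      by (rule alg_fwd[OF L E assms(4)])
  next
    assume "\<exists>\<theta>1 \<theta>2. fst c = exp (complex_of_real (L / 2) + \<i> * complex_of_real \<theta>1) / complex_of_real (sqrt (2 * sinh L)) \<and>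
                 snd c = exp (complex_of_real (- L / 2) + \<i> * complex_of_real \<theta>2) / complex_of_real (sqrt (2 * sinh L))"
    then obtain th1 th2 where f1: "fst c = exp (complex_of_real (L / 2) + \<i> * complex_of_real th1) / complex_of_real (sqrt (2 * sinh L))"
      and f2: "snd c = exp (complex_of_real (- L / 2) + \<i> * complex_of_real th2) / complex_of_real (sqrt (2 * sinh L))" by blast
    note B = alg_back[OF S f1 f2]
    have "\<forall>p::real^3. p \<noteq> 0 \<longrightarrow> (\<forall>t<0. \<forall>x. dsPCTF omega nu c p t x = (\<i> * exp (- \<i> * complex_of_real (th1+th2))) * dsF omega nu c p t x)"
      using Pi B by blast
    then show "\<exists>\<eta>. \<forall>p::real^3. p \<noteq> 0 \<longrightarrow> (\<forall>t<0. \<forall>x. dsPCTF omega nu c p t x = \<eta> * dsF omega nu c p t x)" by blast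
  next
    fix \<eta> :: complex and th1 th2 :: real
    assume A: "fst c = exp (complex_of_real (L / 2) + \<i> * complex_of_real th1) / complex_of_real (sqrt (2 * sinh L)) \<and>
       snd c = exp (complex_of_real (- L / 2) + \<i> * complex_of_real th2) / complex_of_real (sqrt (2 * sinh L)) \<and>
       (\<forall>p::real^3. p \<noteq> 0 \<longrightarrow> (\<forall>t<0. \<forall>x. dsPCTF omega nu c p t x = \<eta> * dsF omega nu c p t x))"
    then have f1: "fst c = exp (complex_of_real (L / 2) + \<i> * complex_of_real th1) / complex_of_real (sqrt (2 * sinh L))"
      and f2: "snd c = exp (complex_of_real (- L / 2) + \<i> * complex_of_real th2) / complex_of_real (sqrt (2 * sinh L))"
      and P: "\<forall>p::real^3. p \<noteq> 0 \<longrightarrow> (\<forall>t<0. \<forall>x. dsPCTF omega nu c p t x = \<eta> * dsF omega nu c p t x)" by blast+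
    have E1: "\<i> * cnj (snd c) * exp (complex_of_real L) = \<eta> * fst c" using Pi P by blast
    note B = alg_back(1)[OF S f1 f2]
    have c1: "fst c \<noteq> 0" using f1 S by simp
    have "\<eta> * fst c = (\<i> * exp (- \<i> * complex_of_real (th1+th2))) * fst c" by (simp only: E1[symmetric] B)
    then have "\<eta> = \<i> * exp (- \<i> * complex_of_real (th1+th2))" using c1 by simp
    also have "\<dots> = exp (- \<i> * complex_of_real (th1 + th2 + 3/2 * pi))"
    proof -
      have "exp (- \<i> * complex_of_real (th1 + th2 + 3/2 * pi)) = exp (- \<i> * complex_of_real (th1+th2)) * exp (- \<i> * complex_of_real (3/2 * pi))"
        by (simp only: of_real_add distrib_left exp_add)
      then show ?thesis unfolding exp_m3half by (simp only: mult.commute)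
    qed
    finally show "\<eta> = exp (- \<i> * (complex_of_real th1 + complex_of_real th2 + complex_of_real (3/2 * pi)))"
      by (simp only: of_real_add)
  qed
qed

end
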